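(* For two integer matrices $M,M'\in\mathrm{Mat}(2,\mathbb{Z})$, the following are equivalent: (a) for all integers $n\ge2$, the reductions mod $n$ of $M$ and $M'$ are $\mathrm{Mat}(2,\mathbb{Z}_n)^\times$-conjugate; (b) $\det(M)=\det(M')$, $\mathrm{trace}(M)=\mathrm{trace}(M')$ and $\mathrm{mgcd}(M)=\mathrm{mgcd}(M')$.
   Context: For $M=\begin{pmatrix}a&b\\c&d\end{pmatrix}$, $\mathrm{mgcd}(M)=\gcd(b,c,d-a)$, a non-negative integer, equal to $0$ iff $b=c=d-a=0$. $\mathrm{Mat}(2,\mathbb{Z}_n)^\times$ is the group of invertible $2\times2$ matrices over $\mathbb{Z}_n=\mathbb{Z}/n\mathbb{Z}$. *)

theory Defs
  imports "HOL-Analysis.Analysis" "HOL-Number_Theory.Cong"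
begin

text \<open>2x2 integer matrices are represented as int^2^2; entry (i,j) is A $ i $ j,
  with indices 1 and 2 of type 2.\<close>

definition mtrace2 :: "int^2^2 \<Rightarrow> int" where
  "mtrace2 M = M $ 1 $ 1 + M $ 2 $ 2"

definition mgcd :: "int^2^2 \<Rightarrow> int" where
  "mgcd M = gcd (M $ 1 $ 2) (gcd (M $ 2 $ 1) (M $ 2 $ 2 - M $ 1 $ 1))"

definition mat_cong :: "int \<Rightarrow> int^2^2 \<Rightarrow> int^2^2 \<Rightarrow> bool" where
  "mat_cong n A B \<longleftrightarrow> (\<forall>i j. [A $ i $ j = B $ i $ j] (mod n))"

text \<open>The reductions mod n of M and M' are conjugate by an element of Mat(2,Z_n)^*:
  there are lifts P, Q of mutually inverse matrices over Z_n with P M Q = M' over Z_n.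
  (Every matrix over Z_n lifts to an integer matrix.)\<close>
definition conj_mod :: "int \<Rightarrow> int^2^2 \<Rightarrow> int^2^2 \<Rightarrow> bool" where
  "conj_mod n M M' \<longleftrightarrow> (\<exists>P Q :: int^2^2.
      mat_cong n (P ** Q) (mat 1) \<and> mat_cong n (Q ** P) (mat 1) \<and>
      mat_cong n (P ** M ** Q) M')"

end

theory Submission
  imports Defs "HOL-Computational_Algebra.Primes"
begin
lemma prime_dvd_prodset:
  fixes X :: "int set"
  assumes "finite X" "\<forall>q\<in>X. prime q" "prime p"
  shows "p dvd \<Prod>X \<longleftrightarrow> p \<in> X"
proof
  assume "p dvd \<Prod>X"
  then obtain q where "q \<in> X" "p dvd q" using prime_dvd_prod_iff[OF assms(1,3), of id] by auto
  then show "p \<in> X" using assms primes_dvd_imp_eq by blast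
next
  assume pX: "p \<in> X" show "p dvd \<Prod>X" using dvd_prodI[OF assms(1) pX, of "\<lambda>x. x"] by simp
qed

lemma primitive_form_coprime:
  fixes A B C m :: int
  assumes m: "m \<noteq> 0" and g: "gcd A (gcd B C) = 1"
  shows "\<exists>x y. coprime (A*x^2 + B*x*y + C*y^2) m"
proof -
  define X where "X = {p. prime p \<and> p dvd m \<and> p dvd A \<and> \<not> p dvd C}"
  define Y where "Y = {p. prime p \<and> p dvd m \<and> \<not> p dvd A}"
  have fin: "finite {p. prime p \<and> p dvd m}" using finite_prime_divisors[OF m] .
  have fX: "finite X" by (rule finite_subset[OF _ fin]) (auto simp: X_def)
  have fY: "finite Y" by (rule finite_subset[OF _ fin]) (auto simp: Y_def)
  define x where "x = \<Prod>X"
  define y where "y = \<Prod>Y"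
  have dx: "prime p \<Longrightarrow> p dvd x \<longleftrightarrow> p \<in> X" for p
    unfolding x_def by (rule prime_dvd_prodset[OF fX]) (auto simp: X_def)
  have dy: "prime p \<Longrightarrow> p dvd y \<longleftrightarrow> p \<in> Y" for p
    unfolding y_def by (rule prime_dvd_prodset[OF fY]) (auto simp: Y_def)
  let ?f = "A*x^2 + B*x*y + C*y^2"
  have "coprime ?f m"
  proof (rule ccontr)
    assume nc: "\<not> coprime ?f m"
    have "gcd ?f m \<noteq> 0" using m by simp
    moreover have "\<not> is_unit (gcd ?f m)" using nc by (simp add: coprime_iff_gcd_eq_1 is_unit_gcd)
    ultimately obtain p where p: "prime p" "p dvd gcd ?f m" using prime_divisorE by blast
    hence pf: "p dvd ?f" and pm: "p dvd m" by auto
    show False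
    proof (cases "p dvd A")
      case False
      hence "p \<in> Y" "p \<notin> X" using p pm by (auto simp: X_def Y_def)
      hence py: "p dvd y" and px: "\<not> p dvd x" using dx dy p by auto
      have "p dvd B*x*y + C*y^2" using py by (simp add: power2_eq_square)
      hence "p dvd A*x^2" using pf by (metis add.assoc dvd_add_left_iff)
      thus False using False px p by (simp add: prime_dvd_mult_iff prime_dvd_power_iff)
    next
      case pA: True
      show False
      proof (cases "p dvd C")
        case False
        hence "p \<in> X" "p \<notin> Y" using p pm pA by (auto simp: X_def Y_def)
        hence px: "p dvd x" and py: "\<not> p dvd y" using dx dy p by auto
        have "p dvd A*x^2 + B*x*y" using px by (simp add: power2_eq_square)
        hence "p dvd C*y^2" using pf by (metis dvd_add_right_iff)
        thus False using False py p by (simp add: prime_dvd_mult_iff prime_dvd_power_iff)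
      next
        case pC: True
        have "\<not> p dvd B"
        proof
          assume "p dvd B"
          hence "p dvd gcd A (gcd B C)" using pA pC by simp
          hence "p dvd 1" using g by simp
          thus False using p(1) not_prime_unit by blast
        qed
        hence "p \<notin> X" "p \<notin> Y" using pC pA by (auto simp: X_def Y_def)
        hence px: "\<not> p dvd x" and py: "\<not> p dvd y" using dx dy p by auto
        have "p dvd A*x^2 + C*y^2" using pA pC by simp
        hence "p dvd B*x*y" using pf by (metis add.commute add.left_commute dvd_add_right_iff)
        thus False using \<open>\<not> p dvd B\<close> px py p by (simp add: prime_dvd_mult_iff)
      qed
    qed
  qed
  thus ?thesis by blast
qed

definition mk :: "int \<Rightarrow> int \<Rightarrow> int \<Rightarrow> int \<Rightarrow> int^2^2" where
  "mk a b c d = (\<chi> i j. if i = 1 then (if j = 1 then a else b) else (if j = 1 then c else d))"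

lemma one_neq_two2: "(1::2) \<noteq> 2" by simp

lemma mk_nth[simp]: "mk a b c d $ 1 $ 1 = a" "mk a b c d $ 1 $ 2 = b"
  "mk a b c d $ 2 $ 1 = c" "mk a b c d $ 2 $ 2 = d"
  by (simp_all add: mk_def)

lemma mk_eta: "M = mk (M$1$1) (M$1$2) (M$2$1) (M$2$2)"
  by (simp add: vec_eq_iff forall_2)

lemma mk_eq: "mk a b c d = mk a' b' c' d' \<longleftrightarrow> a = a' \<and> b = b' \<and> c = c' \<and> d = d'"
  by (simp add: vec_eq_iff forall_2)

lemma mk_mult: "mk a b c d ** mk e f g h = mk (a*e+b*g) (a*f+b*h) (c*e+d*g) (c*f+d*h)"
  by (simp add: vec_eq_iff forall_2 matrix_matrix_mult_def sum_2)

lemma mat_mk: "(mat x :: int^2^2) = mk x 0 0 x"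
  by (simp add: vec_eq_iff forall_2 mat_def)

lemma det_mk: "det (mk a b c d) = a*d - b*c"
  by (simp add: det_2)

lemma mtrace_mk: "mtrace2 (mk a b c d) = a + d"
  by (simp add: mtrace2_def)

lemma mgcd_mk: "mgcd (mk a b c d) = gcd b (gcd c (d - a))"
  by (simp add: mgcd_def)

lemma mat_cong_mk: "mat_cong n (mk a b c d) (mk a' b' c' d') \<longleftrightarrow>
   [a = a'] (mod n) \<and> [b = b'] (mod n) \<and> [c = c'] (mod n) \<and> [d = d'] (mod n)"
  by (simp add: mat_cong_def forall_2)

lemma mat_cong_refl: "mat_cong n A A"
  by (simp add: mat_cong_def)

lemma mat_cong_sym: "mat_cong n A B \<Longrightarrow> mat_cong n B A"
  by (simp add: mat_cong_def cong_sym)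

lemma mat_cong_trans: "mat_cong n A B \<Longrightarrow> mat_cong n B C \<Longrightarrow> mat_cong n A C"
  unfolding mat_cong_def by (blast intro: cong_trans)

lemma mat_cong_mult: "mat_cong n A A' \<Longrightarrow> mat_cong n B B' \<Longrightarrow> mat_cong n (A ** B) (A' ** B')"
  unfolding mat_cong_def matrix_matrix_mult_def by (simp add: sum_2 cong_add cong_mult)

lemma mat_cong_det: "mat_cong n A B \<Longrightarrow> [det A = det B] (mod n)"
  unfolding mat_cong_def det_2 by (simp add: cong_diff cong_mult)

lemma mat_cong_tr: "mat_cong n A B \<Longrightarrow> [mtrace2 A = mtrace2 B] (mod n)"
  unfolding mat_cong_def mtrace2_def by (simp add: cong_add)

lemma mtrace_comm: "mtrace2 (A ** B) = mtrace2 (B ** A)"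
  by (simp add: mtrace2_def matrix_matrix_mult_def sum_2 algebra_simps)

lemma mat_mul_left: "(mat x ** (A::int^2^2)) $ i $ j = x * (A $ i $ j)"
  using exhaust_2[of i] by (auto simp: matrix_matrix_mult_def mat_def sum_2)

lemma mat_comm: "mat x ** (A::int^2^2) = A ** mat x"
  by (subst (1 2) mk_eta[of A]) (simp add: mat_mk mk_mult mk_eq)

lemma mat_mat: "mat x ** (mat y :: int^2^2) = mat (x*y)"
  by (simp add: mat_mk mk_mult mk_eq)

definition adj2 :: "int^2^2 \<Rightarrow> int^2^2" where
  "adj2 S = mk (S$2$2) (-S$1$2) (-S$2$1) (S$1$1)"

lemma adj2_right: "S ** adj2 S = mat (det S)"
  by (subst (1 2) mk_eta[of S]) (simp add: adj2_def mat_mk mk_mult mk_eq det_mk)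

lemma adj2_left: "adj2 S ** S = mat (det S)"
  by (subst (1 2) mk_eta[of S]) (simp add: adj2_def mat_mk mk_mult mk_eq det_mk)

lemma mat_cong_scal: "[x = 1] (mod n) \<Longrightarrow> mat_cong n (mat x ** A) A"
  unfolding mat_cong_def mat_mul_left using cong_scalar_right[of x 1 n] by auto

lemma mat_cong_scal1: "[x = 1] (mod n) \<Longrightarrow> mat_cong n (mat x) (mat 1)"
  using mat_cong_scal[of x n "mat 1"] by simp

lemma conj_det: "conj_mod n M M' \<Longrightarrow> [det M = det M'] (mod n)"
proof -
  assume "conj_mod n M M'"
  then obtain P Q where pq: "mat_cong n (P ** Q) (mat 1)" and qp: "mat_cong n (Q ** P) (mat 1)"
    and c: "mat_cong n (P ** M ** Q) M'" unfolding conj_mod_def by blast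
  have "[det (P ** M ** Q) = det M'] (mod n)" using mat_cong_det[OF c] .
  moreover have "det (P ** M ** Q) = det (P ** Q) * det M" by (simp add: det_mul)
  moreover have "[det (P ** Q) * det M = det (mat 1 :: int^2^2) * det M] (mod n)"
    using cong_scalar_right[OF mat_cong_det[OF pq], of "det M"] by simp
  ultimately show ?thesis by (simp add: det_I) (metis cong_sym cong_trans)
qed

lemma conj_tr: "conj_mod n M M' \<Longrightarrow> [mtrace2 M = mtrace2 M'] (mod n)"
proof -
  assume "conj_mod n M M'"
  then obtain P Q where pq: "mat_cong n (P ** Q) (mat 1)" and qp: "mat_cong n (Q ** P) (mat 1)"
    and c: "mat_cong n (P ** M ** Q) M'" unfolding conj_mod_def by blast
  have "mtrace2 (P ** M ** Q) = mtrace2 ((Q ** P) ** M)"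
    by (metis matrix_mul_assoc mtrace_comm)
  moreover have "[mtrace2 ((Q ** P) ** M) = mtrace2 (mat 1 ** M)] (mod n)"
    by (rule mat_cong_tr[OF mat_cong_mult[OF qp mat_cong_refl]])
  ultimately show ?thesis using mat_cong_tr[OF c]
    by simp (metis cong_sym cong_trans)
qed

lemma conj_mgcd: "conj_mod n M M' \<Longrightarrow> n dvd mgcd M \<Longrightarrow> n dvd mgcd M'"
proof -
  assume "conj_mod n M M'" and nd: "n dvd mgcd M"
  then obtain P Q where pq: "mat_cong n (P ** Q) (mat 1)" and qp: "mat_cong n (Q ** P) (mat 1)"
    and c: "mat_cong n (P ** M ** Q) M'" unfolding conj_mod_def by blast
  define a where "a = M$1$1"
  have d: "n dvd M$1$2" "n dvd M$2$1" "n dvd M$2$2 - M$1$1" using nd by (auto simp: mgcd_def)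
  have "mat_cong n M (mat a)"
    unfolding a_def using d
    by (subst mk_eta[of M]) (simp add: mat_mk mat_cong_mk cong_0_iff cong_iff_dvd_diff)
  hence F1: "mat_cong n (P ** M ** Q) (P ** mat a ** Q)"
    by (intro mat_cong_mult mat_cong_refl)
  have F2: "P ** mat a ** Q = mat a ** (P ** Q)"
    by (simp only: mat_comm matrix_mul_assoc)
  have F3: "mat_cong n (mat a ** (P ** Q)) (mat a ** mat 1)"
    by (intro mat_cong_mult mat_cong_refl pq)
  have "mat_cong n (P ** M ** Q) (mat a ** mat 1)"
    using mat_cong_trans[OF F1[unfolded F2] F3] .
  hence X: "mat_cong n (P ** M ** Q) (mat a)" by simp
  have "mat_cong n M' (mat a)" by (rule mat_cong_trans[OF mat_cong_sym[OF c] X])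
  hence "[M'$1$2 = 0] (mod n)" "[M'$2$1 = 0] (mod n)" "[M'$2$2 = a] (mod n)" "[M'$1$1 = a] (mod n)"
    by (subst (asm) mk_eta[of M'], simp add: mat_mk mat_cong_mk)+
  hence "[M'$2$2 - M'$1$1 = 0] (mod n)" by (metis cong_diff diff_self)
  thus ?thesis unfolding mgcd_def
    using \<open>[M'$1$2 = 0] (mod n)\<close> \<open>[M'$2$1 = 0] (mod n)\<close> by (simp add: cong_0_iff)
qed

lemma all_dvd_eq: fixes x y :: int
  assumes "\<forall>n\<ge>2. [x = y] (mod n)" shows "x = y"
proof -
  have "[x = y] (mod (\<bar>x - y\<bar> + 2))" using assms by simp
  hence "(\<bar>x - y\<bar> + 2) dvd \<bar>x - y\<bar>" by (simp add: cong_iff_dvd_diff)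
  moreover have "\<not> \<bar>x - y\<bar> > 0 \<or> \<bar>x - y\<bar> + 2 \<le> \<bar>x - y\<bar>"
    using calculation zdvd_imp_le by blast
  ultimately show ?thesis by linarith
qed

lemma dvd_set_eq: fixes g g' :: int
  assumes "g \<ge> 0" "g' \<ge> 0" "\<forall>n\<ge>2. n dvd g \<longleftrightarrow> n dvd g'" shows "g = g'"
proof -
  have A: "x = y" if h: "\<forall>n\<ge>2. n dvd x \<longleftrightarrow> n dvd y" "x \<ge> 0" "y \<ge> 0" "x \<le> y" for x y :: int
  proof -
    have "y + 2 dvd x \<longleftrightarrow> y + 2 dvd y" using h by simp
    show ?thesis
    proof (cases "y \<ge> 2")
      case True
      hence "y dvd x" using h by simp
      show ?thesis
      proof (cases "x = 0")
        case True
        hence "x + y + 2 dvd y" using h by simp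
        thus ?thesis using h \<open>y \<ge> 2\<close> by (smt (verit) zdvd_imp_le)
      next
        case False
        thus ?thesis using \<open>y dvd x\<close> h by (smt (verit) zdvd_imp_le)
      qed
    next
      case False
      hence "y = 0 \<or> y = 1" using h by auto
      thus ?thesis
      proof
        assume "y = 0" thus ?thesis using h by simp
      next
        assume y1: "y = 1"
        hence "x = 0 \<or> x = 1" using h by auto
        moreover have "2 dvd x \<longleftrightarrow> 2 dvd y" using h(1) by simp
        hence "x \<noteq> 0" using y1 by auto
        ultimately show ?thesis using y1 by simp
      qed
    qed
  qed
  show ?thesis
  proof (cases "g \<le> g'")
    case True thus ?thesis using A assms by blast
  next
    case False thus ?thesis using A[of g' g] assms by auto
  qed
qed

lemma amod:
  fixes a b c d a' b' c' d' g b1 c1 e1 b1' c1' e1' :: int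
  assumes g: "g > 0" and b: "b = g*b1" "c = g*c1" "d = a + g*e1" "b' = g*b1'" "c' = g*c1'" "d' = a' + g*e1'"
    and tr: "a + d = a' + d'" and dt: "a*d - b*c = a'*d' - b'*c'"
  shows "a mod g = a' mod g"
proof -
  define DD where "DD = a - a'"
  define q where "q = e1' - e1"
  define w where "w = b1*c1 - b1'*c1'"
  have tq: "2*DD = g*q" using tr b by (simp add: DD_def q_def algebra_simps)
  have ge: "g*e1' = g*e1 + 2*DD" using tq by (simp add: q_def algebra_simps)
  have eq0: "a*(a+g*e1) - g^2*b1*c1 = a'*(a'+g*e1') - g^2*b1'*c1'"
    using dt b by (simp add: power2_eq_square algebra_simps)
  hence eq1: "a*(a+g*e1) - g^2*b1*c1 = a'*(a' + (g*e1 + 2*DD)) - g^2*b1'*c1'"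
    by (simp only: ge)
  have id1: "DD*(DD+g*e1) - g^2*w = (a*(a+g*e1) - g^2*b1*c1) - (a'*(a' + (g*e1 + 2*DD)) - g^2*b1'*c1')"
    by (simp add: DD_def w_def power2_eq_square algebra_simps)
  have e2: "DD*(DD+g*e1) = g^2*w" using id1 eq1 by simp
  have "g^2*(q*(q+2*e1)) = (g*q)*(g*q+2*g*e1)" by (simp add: power2_eq_square algebra_simps)
  also have "\<dots> = (2*DD)*(2*DD+2*g*e1)" using tq by simp
  also have "\<dots> = 4*(DD*(DD+g*e1))" by (simp add: algebra_simps)
  also have "\<dots> = g^2*(4*w)" using e2 by simp
  finally have "g^2*(q*(q+2*e1)) = g^2*(4*w)" .
  hence ss: "q*(q+2*e1) = 4*w" using g by simp
  have "even q"
  proof (rule ccontr)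
    assume "odd q"
    hence "odd (q*(q+2*e1))" by simp
    thus False using ss by simp
  qed
  then obtain u where "q = 2*u" by blast
  hence "DD = g*u" using tq by simp
  hence "g dvd a - a'" by (simp add: DD_def)
  thus ?thesis by (simp add: mod_eq_dvd_iff)
qed

lemma canon:
  fixes a b c d g n :: int
  assumes g: "g = gcd b (gcd c (d - a))" "g > 0" and n: "n \<noteq> 0"
  shows "\<exists>S Y. coprime (det S) n \<and> g*Y = (a mod g)*(a + d - a mod g) - (a*d - b*c) \<and>
     mk a b c d ** S = S ** mk (a mod g) Y g (a + d - a mod g)"
proof -
  have "g dvd b" "g dvd c" "g dvd d - a" using g(1) by (auto intro: dvd_trans[OF gcd_dvd2])
  then obtain b1 c1 e1 where b1: "b = g*b1" and c1: "c = g*c1" and e1: "d - a = g*e1"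
    by (metis dvdE)
  have "g = gcd (g*b1) (gcd (g*c1) (g*e1))" using g b1 c1 e1 by simp
  also have "\<dots> = g * gcd b1 (gcd c1 e1)" using g(2) by (simp add: gcd_mult_left abs_mult)
  finally have "gcd b1 (gcd c1 e1) = 1" using g(2) by simp
  hence prim: "gcd c1 (gcd e1 (-b1)) = 1" by (simp add: ac_simps)
  obtain x y where xy: "coprime (c1*x^2 + e1*x*y + (-b1)*y^2) n"
    using primitive_form_coprime[OF n prim] by blast
  define a0 where "a0 = a mod g"
  define k where "k = a div g"
  have a: "a = a0 + g*k" by (simp add: a0_def k_def)
  have d: "d = a0 + g*k + g*e1" using e1 a by simp
  define S where "S = mk x (x*k + b1*y) y (y*k + c1*x + e1*y)"
  define Y where "Y = g*(b1*c1 - k^2 - k*e1)"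
  have "det S = c1*x^2 + e1*x*y + (-b1)*y^2"
    by (simp add: S_def det_mk power2_eq_square algebra_simps)
  hence 1: "coprime (det S) n" using xy by simp
  have 2: "g*Y = a0*(a + d - a0) - (a*d - b*c)"
    unfolding Y_def b1 c1 d a by (simp add: power2_eq_square algebra_simps)
  have 3: "mk a b c d ** S = S ** mk a0 Y g (a + d - a0)"
    unfolding S_def Y_def b1 c1 d a mk_mult mk_eq by (simp add: power2_eq_square algebra_simps)
  show ?thesis using 1 2 3 unfolding a0_def by blast
qed

lemma combine:
  assumes MS: "M ** S = S ** K" and MS': "M' ** S' = S' ** K"
    and c: "coprime (det S) n" and c': "coprime (det S') n"
  shows "conj_mod n M M'"
proof -
  obtain u where u: "[det S * u = 1] (mod n)" using cong_solve_coprime_int[OF c] by blast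
  obtain u' where u': "[det S' * u' = 1] (mod n)" using cong_solve_coprime_int[OF c'] by blast
  define k where "k = u*u'"
  define P where "P = mat k ** (S' ** adj2 S)"
  define Q where "Q = S ** adj2 S'"
  have kk: "[k * det S * det S' = 1] (mod n)"
  proof -
    have "[(det S * u) * (det S' * u') = 1 * 1] (mod n)" using cong_mult[OF u u'] .
    thus ?thesis by (simp add: k_def ac_simps)
  qed
  have "P ** Q = mat k ** (S' ** (adj2 S ** S) ** adj2 S')"
    by (simp add: P_def Q_def matrix_mul_assoc)
  also have "\<dots> = mat k ** (mat (det S) ** (S' ** adj2 S'))"
    by (simp add: adj2_left mat_comm matrix_mul_assoc)
  also have "\<dots> = mat (k * det S * det S')"
    by (simp add: adj2_right mat_mat matrix_mul_assoc mult.assoc)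
  finally have PQ: "P ** Q = mat (k * det S * det S')" .
  have "Q ** P = (Q ** mat k) ** (S' ** adj2 S)" by (simp add: P_def matrix_mul_assoc)
  also have "\<dots> = mat k ** (S ** (adj2 S' ** S') ** adj2 S)"
    by (simp add: Q_def mat_comm[symmetric] matrix_mul_assoc)
  also have "\<dots> = mat k ** (mat (det S') ** (S ** adj2 S))"
    by (simp add: adj2_left mat_comm matrix_mul_assoc)
  also have "\<dots> = mat (k * det S * det S')"
    by (simp add: adj2_right mat_mat matrix_mul_assoc mult_ac)
  finally have QP: "Q ** P = mat (k * det S * det S')" .
  have "P ** M ** Q = mat k ** (S' ** adj2 S ** (M ** S) ** adj2 S')"
    by (simp add: P_def Q_def matrix_mul_assoc)
  also have "\<dots> = mat k ** (S' ** (adj2 S ** S) ** K ** adj2 S')"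
    by (simp add: MS matrix_mul_assoc)
  also have "\<dots> = mat k ** (mat (det S) ** ((S' ** K) ** adj2 S'))"
    by (simp add: adj2_left mat_comm matrix_mul_assoc)
  also have "\<dots> = mat k ** (mat (det S) ** (M' ** (S' ** adj2 S')))"
    by (simp add: MS'[symmetric] matrix_mul_assoc)
  also have "\<dots> = mat k ** mat (det S) ** (M' ** mat (det S'))"
    by (simp add: adj2_right matrix_mul_assoc)
  also have "\<dots> = mat k ** mat (det S) ** (mat (det S') ** M')"
    by (simp add: mat_comm[of "det S'" M', symmetric])
  also have "\<dots> = mat (k * det S * det S') ** M'"
    by (simp add: mat_mat matrix_mul_assoc)
  finally have PMQ: "P ** M ** Q = mat (k * det S * det S') ** M'" .
  have c1: "mat_cong n (P ** Q) (mat 1)" unfolding PQ by (rule mat_cong_scal1[OF kk])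
  have c2: "mat_cong n (Q ** P) (mat 1)" unfolding QP by (rule mat_cong_scal1[OF kk])
  have c3: "mat_cong n (P ** M ** Q) M'" unfolding PMQ by (rule mat_cong_scal[OF kk])
  show ?thesis unfolding conj_mod_def
    by (rule exI[of _ P], rule exI[of _ Q]) (intro conjI c1 c2 c3)
qed

lemma conj_sym: "conj_mod n M M' \<Longrightarrow> conj_mod n M' M"
proof -
  assume "conj_mod n M M'"
  then obtain P Q where pq: "mat_cong n (P ** Q) (mat 1)" and qp: "mat_cong n (Q ** P) (mat 1)"
    and c: "mat_cong n (P ** M ** Q) M'" unfolding conj_mod_def by blast
  have G1: "mat_cong n (Q ** M' ** P) (Q ** (P ** M ** Q) ** P)"
    by (intro mat_cong_mult mat_cong_refl mat_cong_sym[OF c])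
  have G2: "Q ** (P ** M ** Q) ** P = (Q ** P) ** M ** (Q ** P)"
    by (simp add: matrix_mul_assoc)
  have G3: "mat_cong n ((Q ** P) ** M ** (Q ** P)) (mat 1 ** M ** mat 1)"
    by (intro mat_cong_mult mat_cong_refl qp)
  have "mat_cong n (Q ** M' ** P) (mat 1 ** M ** mat 1)"
    using mat_cong_trans[OF G1[unfolded G2] G3] .
  hence "mat_cong n (Q ** M' ** P) M" by simp
  thus ?thesis unfolding conj_mod_def using pq qp by blast
qed

lemma mgcd_nonneg: "mgcd M \<ge> 0" by (simp add: mgcd_def)

lemma b_to_a:
  fixes a b c d a' b' c' d' n :: int
  assumes n: "n \<ge> 2"
    and dt: "a*d - b*c = a'*d' - b'*c'" and tr: "a + d = a' + d'"
    and gg: "gcd b (gcd c (d - a)) = gcd b' (gcd c' (d' - a'))"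
  shows "conj_mod n (mk a b c d) (mk a' b' c' d')"
proof -
  define g where "g = gcd b (gcd c (d - a))"
  have "g \<ge> 0" by (simp add: g_def)
  show ?thesis
  proof (cases "g = 0")
    case True
    hence "b = 0" "c = 0" "d = a" by (simp_all add: g_def)
    moreover have "b' = 0" "c' = 0" "d' = a'" using True gg by (simp_all add: g_def)
    ultimately have "mk a b c d = mk a' b' c' d'" using tr by (simp add: mk_eq)
    thus ?thesis unfolding conj_mod_def by (metis mat_cong_refl matrix_mul_lid matrix_mul_rid)
  next
    case False
    hence gp: "g > 0" using \<open>g \<ge> 0\<close> by simp
    have g': "g = gcd b' (gcd c' (d' - a'))" using gg by (simp add: g_def)
    have n0: "n \<noteq> 0" using n by simp
    obtain S Y where S: "coprime (det S) n" "g*Y = (a mod g)*(a + d - a mod g) - (a*d - b*c)"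
      "mk a b c d ** S = S ** mk (a mod g) Y g (a + d - a mod g)"
      using canon[OF g_def gp n0] by blast
    obtain S' Y' where S': "coprime (det S') n" "g*Y' = (a' mod g)*(a' + d' - a' mod g) - (a'*d' - b'*c')"
      "mk a' b' c' d' ** S' = S' ** mk (a' mod g) Y' g (a' + d' - a' mod g)"
      using canon[OF g' gp n0] by blast
    have "g dvd b" "g dvd c" "g dvd d - a" unfolding g_def by (auto intro: dvd_trans[OF gcd_dvd2])
    then obtain b1 c1 e1 where b1: "b = g*b1" "c = g*c1" "d - a = g*e1" by (metis dvdE)
    have "g dvd b'" "g dvd c'" "g dvd d' - a'" unfolding g' by (auto intro: dvd_trans[OF gcd_dvd2])
    then obtain b1' c1' e1' where b1': "b' = g*b1'" "c' = g*c1'" "d' - a' = g*e1'" by (metis dvdE)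
    have d1: "d = a + g*e1" using b1(3) by simp
    have d1': "d' = a' + g*e1'" using b1'(3) by simp
    have am: "a mod g = a' mod g"
      by (rule amod[OF gp b1(1,2) d1 b1'(1,2) d1' tr dt])
    have "g*Y = g*Y'" using S(2) S'(2) am tr dt by simp
    hence "Y = Y'" using gp by simp
    thus ?thesis using combine[OF S(3) _ S(1) S'(1)] S'(3) am tr by simp
  qed
qed

theorem theorem41:
  fixes M M' :: "int^2^2"
  shows "(\<forall>n::int. n \<ge> 2 \<longrightarrow> conj_mod n M M') \<longleftrightarrow>
         (det M = det M' \<and> mtrace2 M = mtrace2 M' \<and> mgcd M = mgcd M')"
proof
  assume H: "\<forall>n::int. n \<ge> 2 \<longrightarrow> conj_mod n M M'"
  have "det M = det M'" by (rule all_dvd_eq) (use H conj_det in blast)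
  moreover have "mtrace2 M = mtrace2 M'" by (rule all_dvd_eq) (use H conj_tr in blast)
  moreover have "mgcd M = mgcd M'"
    by (rule dvd_set_eq[OF mgcd_nonneg mgcd_nonneg]) (use H conj_mgcd conj_sym in blast)
  ultimately show "det M = det M' \<and> mtrace2 M = mtrace2 M' \<and> mgcd M = mgcd M'" by blast
next
  assume H: "det M = det M' \<and> mtrace2 M = mtrace2 M' \<and> mgcd M = mgcd M'"
  show "\<forall>n::int. n \<ge> 2 \<longrightarrow> conj_mod n M M'"
  proof (intro allI impI)
    fix n :: int assume n: "n \<ge> 2"
    have "conj_mod n (mk (M$1$1) (M$1$2) (M$2$1) (M$2$2)) (mk (M'$1$1) (M'$1$2) (M'$2$1) (M'$2$2))"
      by (rule b_to_a[OF n]) (use H in \<open>simp_all add: det_2 mtrace2_def mgcd_def\<close>)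
    thus "conj_mod n M M'" by (simp only: mk_eta[symmetric])
  qed
qed
end
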